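(* Let $\Omega=(-1,1)$, let $p,\nu\in\mathbb{N}_0$ with $\nu\le p$, and let $u\in H^{\nu+1}(\Omega)$. Let $q_{p,\nu}\in\Lambda_{p-\nu}^{p+\nu+1}$ be a polynomial with \[ q_{p,\nu}(1)=1,\quad q_{p,\nu}(-1)=0,\quad\text{and}\quad q_{p,\nu}^{(i)}(\pm1)=0\ \text{ for } i=1,\dots,\nu . \] Then \[ \bigl\lvert (u-\pi_p u)^{(\nu)}(\pm1)\bigr\rvert\le\|q_{p,\nu}\|_0\,\lvert u\rvert_{\nu+1}. \]
   Context: $L_j$ denotes the Legendre polynomial of degree $j$ on $(-1,1)$. For integers $i\le j$, $\Lambda_i^j:=\operatorname{span}\{L_i,L_{i+1},\dots,L_j\}$. $\|\cdot\|_0$ is the $L^2(\Omega)$ norm, and $\lvert u\rvert_k:=\|u^{(k)}\|_0$. $H^k(\Omega)$ is the usual Sobolev space. $\pi_p u$ is the $L^2(\Omega)$-orthogonal projection of $u$ onto the polynomials of degree $\le p$. *)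

theory Defs
  imports "HOL-Analysis.Analysis" "HOL-Computational_Algebra.Polynomial"
begin

fun legendre :: "nat \<Rightarrow> real poly" where
  "legendre 0 = 1"
| "legendre (Suc 0) = [:0, 1:]"
| "legendre (Suc (Suc n)) =
     smult (1 / (real n + 2))
       (smult (2 * real n + 3) ([:0, 1:] * legendre (Suc n)) - smult (real n + 1) (legendre n))"

definition Lambda :: "nat \<Rightarrow> nat \<Rightarrow> real poly set" where
  "Lambda i j = {q. \<exists>c :: nat \<Rightarrow> real. q = (\<Sum>k = i..j. smult (c k) (legendre k))}"

definition l2norm :: "(real \<Rightarrow> real) \<Rightarrow> real" where
  "l2norm f = sqrt (integral {-1..1} (\<lambda>x. (f x)^2))"

text \<open>u belongs to H^k(-1,1), with D j the (continuous representative of the)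
  j-th derivative for j < k and D k the top (weak, L2) derivative:
  D 0 = u on [-1,1], each D j (j<k) is the indefinite integral of D (j+1),
  and D k is square integrable.\<close>
definition sobolev_chain :: "nat \<Rightarrow> (real \<Rightarrow> real) \<Rightarrow> (nat \<Rightarrow> real \<Rightarrow> real) \<Rightarrow> bool" where
  "sobolev_chain k u D \<longleftrightarrow>
     (\<forall>x\<in>{-1..1}. D 0 x = u x) \<and>
     (\<forall>j<k. D (Suc j) integrable_on {-1..1} \<and>
        (\<forall>x\<in>{-1..1}. D j x = D j (-1) + integral {-1..x} (D (Suc j)))) \<and>
     D k integrable_on {-1..1} \<and>
     (\<lambda>x. (D k x)^2) integrable_on {-1..1}"

definition is_L2_proj :: "nat \<Rightarrow> (real \<Rightarrow> real) \<Rightarrow> real poly \<Rightarrow> bool" where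
  "is_L2_proj p u P \<longleftrightarrow> degree P \<le> p \<and>
     (\<forall>Q. degree Q \<le> p \<longrightarrow> integral {-1..1} (\<lambda>x. (u x - poly P x) * poly Q x) = 0)"

definition proj_L2 :: "nat \<Rightarrow> (real \<Rightarrow> real) \<Rightarrow> real poly" where
  "proj_L2 p u = (THE P. is_L2_proj p u P)"

end

theory Submission
  imports Defs
begin


lemma fub_tri:
  fixes f :: "real \<Rightarrow> real" and r :: "real poly"
  assumes f: "f absolutely_integrable_on {a..b}" and ab: "a \<le> b"
  shows "integral {a..b} (\<lambda>x. poly (pderiv r) x * integral {a..x} f)
       = integral {a..b} (\<lambda>t. f t * (poly r b - poly r t))"
proof -
  define h where "h = (\<lambda>x. indicator {a..b} x *\<^sub>R f x)"
  have hi: "integrable lebesgue h" using f unfolding h_def set_integrable_def .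
  then have "h \<in> borel_measurable lebesgue" by auto
  then obtain h' where h'm[measurable]: "h' \<in> borel_measurable lborel" and hh': "AE x in lborel. h x = h' x"
    using completion_ex_borel_measurable_real by blast
  have "integrable lebesgue h'"
    using hi hh' integrable_cong_AE[of h lebesgue h'] AE_completion[OF hh']
      measurable_completion[OF h'm] \<open>h \<in> borel_measurable lebesgue\<close> by auto
  then have h'i: "integrable lborel h'"
    using integrable_completion[of h' lborel] h'm by simp
  have fi: "f integrable_on {a..b}" using f set_lebesgue_integral_eq_integral(1) by blast
  have hf: "integral {a..x} h' = integral {a..x} f" if "x \<in> {a..b}" for x
  proof -
    have "AE y in lborel. y \<in> {a..x} \<longrightarrow> h' y = f y"
      using hh' by eventually_elim (use that in \<open>auto simp: h_def indicator_def\<close>)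
    then have "(h' has_integral integral {a..x} f) {a..x} = (f has_integral integral {a..x} f) {a..x}"
      by (rule has_integral_AE)
    moreover have "f integrable_on {a..x}"
      using fi by (rule integrable_subinterval_real) (use that in auto)
    ultimately show ?thesis by (simp add: integrable_integral integral_unique)
  qed
  have pc[measurable]: "poly s \<in> borel_measurable borel" for s :: "real poly"
    by (intro borel_measurable_continuous_onI continuous_intros)
  define k where "k = (\<lambda>x t. if a \<le> t \<and> t \<le> x \<and> x \<le> b then poly (pderiv r) x * h' t else 0)"
  have km[measurable]: "case_prod k \<in> borel_measurable (lborel \<Otimes>\<^sub>M lborel)"
    unfolding k_def by measurable
  have "compact (poly (pderiv r) ` {a..b})"
    by (intro compact_continuous_image continuous_intros compact_Icc)
  then obtain M where M: "\<And>x. x \<in> {a..b} \<Longrightarrow> norm (poly (pderiv r) x) \<le> M"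
    using compact_imp_bounded bounded_iff by (metis image_eqI)
  then have M0: "0 \<le> M" using ab by (meson atLeastAtMost_iff norm_ge_zero order.trans order_refl)
  define d where "d = (\<lambda>(x::real, t::real). M * (indicator {a..b} x * \<bar>h' t\<bar>))"
  have dm[measurable]: "d \<in> borel_measurable (lborel \<Otimes>\<^sub>M lborel)" unfolding d_def by measurable
  have di: "integrable (lborel \<Otimes>\<^sub>M lborel) d"
  proof (rule lborel_pair.Fubini_integrable[OF dm])
    have "(\<lambda>x. \<integral>y. norm (d (x, y)) \<partial>lborel) = (\<lambda>x. indicator {a..b} x * (M * \<integral>y. \<bar>h' y\<bar> \<partial>lborel))"
      using M0 by (auto simp: d_def abs_mult indicator_def)
    moreover have "integrable lborel (indicat_real {a..b})"
      by (rule integrable_real_indicator) (use ab in auto)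
    ultimately show "integrable lborel (\<lambda>x. \<integral>y. norm (d (x, y)) \<partial>lborel)"
      by simp
    show "AE x in lborel. integrable lborel (\<lambda>y. d (x, y))"
      using h'i by (simp add: d_def)
  qed
  have ki: "integrable (lborel \<Otimes>\<^sub>M lborel) (case_prod k)"
  proof (rule Bochner_Integration.integrable_bound[OF di km], rule AE_I2)
    fix z :: "real \<times> real"
    obtain x t where z: "z = (x, t)" by (cases z)
    show "norm (case_prod k z) \<le> norm (d z)"
      using M[of x] M0 by (auto simp: z k_def d_def abs_mult intro!: mult_right_mono)
  qed
  have inner1: "(\<integral>t. k x t \<partial>lborel) = indicator {a..b} x * (poly (pderiv r) x * integral {a..x} f)" for x
  proof (cases "x \<in> {a..b}")
    case True
    have "(\<lambda>t. k x t) = (\<lambda>t. poly (pderiv r) x * (indicator {a..x} t *\<^sub>R h' t))"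
      using True by (auto simp: k_def indicator_def fun_eq_iff)
    moreover have "set_integrable lborel {a..x} h'"
      unfolding set_integrable_def by (rule integrable_mult_indicator) (use h'i in auto)
    ultimately show ?thesis
      using True set_borel_integral_eq_integral(2)[of "{a..x}" h'] hf[OF True]
      by (simp add: set_lebesgue_integral_def)
  next
    case False
    then have "(\<lambda>t. k x t) = (\<lambda>t. 0)" by (auto simp: k_def fun_eq_iff)
    then show ?thesis using False by simp
  qed
  have inner2: "(\<integral>x. k x t \<partial>lborel) = indicator {a..b} t * (h' t * (poly r b - poly r t))" for t
  proof (cases "t \<in> {a..b}")
    case True
    have "(\<lambda>x. k x t) = (\<lambda>x. h' t * (poly (pderiv r) x * indicator {t..b} x))"
      using True by (auto simp: k_def indicator_def fun_eq_iff)
    moreover have "(\<integral>x. poly (pderiv r) x * indicator {t..b} x \<partial>lborel) = poly r b - poly r t"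
      by (rule integral_FTC_Icc_real) (use True in \<open>auto intro: poly_DERIV\<close>)
    ultimately show ?thesis using True by simp
  next
    case False
    then have "(\<lambda>x. k x t) = (\<lambda>x. 0)" by (auto simp: k_def fun_eq_iff)
    then show ?thesis using False by simp
  qed
  have fub: "(\<integral>t. (\<integral>x. k x t \<partial>lborel) \<partial>lborel) = (\<integral>x. (\<integral>t. k x t \<partial>lborel) \<partial>lborel)"
    by (rule lborel_pair.Fubini_integral[OF ki])
  have c1: "continuous_on {a..b} (\<lambda>x. poly (pderiv r) x * integral {a..x} f)"
    by (intro continuous_intros indefinite_integral_continuous_1 fi)
  have "(\<integral>x. (\<integral>t. k x t \<partial>lborel) \<partial>lborel) = integral {a..b} (\<lambda>x. poly (pderiv r) x * integral {a..x} f)"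
    using set_borel_integral_eq_integral(2)[OF borel_integrable_atLeastAtMost'[OF c1]]
    by (simp add: inner1 set_lebesgue_integral_def)
  moreover have "(\<integral>t. (\<integral>x. k x t \<partial>lborel) \<partial>lborel) = integral {a..b} (\<lambda>t. f t * (poly r b - poly r t))"
  proof -
    have si: "set_integrable lborel {a..b} (\<lambda>t. h' t * (poly r b - poly r t))"
      using lborel_pair.integrable_snd[OF ki] by (simp add: inner2 set_integrable_def)
    have "(\<integral>t. (\<integral>x. k x t \<partial>lborel) \<partial>lborel) = integral {a..b} (\<lambda>t. h' t * (poly r b - poly r t))"
      using set_borel_integral_eq_integral(2)[OF si]
      by (simp add: inner2 set_lebesgue_integral_def)
    also have "\<dots> = integral {a..b} (\<lambda>t. f t * (poly r b - poly r t))"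
    proof -
      have "AE y in lborel. y \<in> {a..b} \<longrightarrow> h' y * (poly r b - poly r y) = f y * (poly r b - poly r y)"
        using hh' by eventually_elim (auto simp: h_def indicator_def)
      then have "\<And>I. ((\<lambda>t. h' t * (poly r b - poly r t)) has_integral I) {a..b} = ((\<lambda>t. f t * (poly r b - poly r t)) has_integral I) {a..b}"
        by (rule has_integral_AE)
      moreover have "(\<lambda>t. h' t * (poly r b - poly r t)) integrable_on {a..b}"
        using set_borel_integral_eq_integral(1)[OF si] .
      ultimately show ?thesis by (metis integrable_integral integral_unique)
    qed
    finally show ?thesis .
  qed
  ultimately show ?thesis using fub by simp
qed


abbreviation "LL \<equiv> legendre"

definition pint :: "real poly \<Rightarrow> real" where
  "pint R = integral {-1..1} (\<lambda>x. poly R x)"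

lemma pint_pderiv: "pint (pderiv R) = poly R 1 - poly R (-1)"
proof -
  have "((\<lambda>x. poly (pderiv R) x) has_integral (poly R 1 - poly R (-1))) {-1..1}"
    by (rule fundamental_theorem_of_calculus)
       (auto intro!: DERIV_subset[OF poly_DERIV] simp: has_real_derivative_iff_has_vector_derivative[symmetric])
  then show ?thesis unfolding pint_def by (rule integral_unique)
qed

lemma poly_integrable: "(\<lambda>x. poly R x) integrable_on {a..b::real}"
  by (intro integrable_continuous_real continuous_intros)

lemma pint_add: "pint (R + S) = pint R + pint S"
proof -
  have "poly (R + S) = (\<lambda>x. poly R x + poly S x)" by auto
  then show ?thesis unfolding pint_def by (simp add: integral_add poly_integrable)
qed
lemma pint_diff: "pint (R - S) = pint R - pint S"
proof -
  have "poly (R - S) = (\<lambda>x. poly R x - poly S x)" by auto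
  then show ?thesis unfolding pint_def by (simp add: integral_diff poly_integrable)
qed
lemma pint_smult: "pint (smult c R) = c * pint R"
proof -
  have "poly (smult c R) = (\<lambda>x. c * poly R x)" by auto
  then show ?thesis unfolding pint_def by simp
qed
lemma pint_mult: "pint (A * B) = integral {-1..1} (\<lambda>x. poly A x * poly B x)"
proof -
  have "poly (A * B) = (\<lambda>x. poly A x * poly B x)" by auto
  then show ?thesis unfolding pint_def by simp
qed

lemma pint_sum: "finite A \<Longrightarrow> pint (\<Sum>i\<in>A. F i) = (\<Sum>i\<in>A. pint (F i))"
  by (induction A rule: finite_induct) (auto simp: pint_add, simp add: pint_def)

lemma leg_rec: "LL (Suc (Suc n)) =
     smult (1 / (real n + 2)) (smult (2 * real n + 3) ([:0, 1:] * LL (Suc n)) - smult (real n + 1) (LL n))"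
  by simp

declare legendre.simps(3)[simp del]

lemma pderiv_X: "pderiv [:0, 1::real:] = 1"
  by (simp add: pderiv_pCons)

lemma polyeqI: "(\<And>x::real. poly p x = poly q x) \<Longrightarrow> p = q"
  using poly_eq_poly_eq_iff by blast

lemma arithC:
  fixes m c x a l c' a' :: real
  assumes "(m+2)*c = (2*m+3)*x*a - (m+1)*l" "c' = x*a' + (m+2)*a" "(x^2-1)*a' = (m+1)*(x*a - l)"
  shows "x*c' - a' = (m+1+1)*c"
proof -
  have "x*c' - a' = (x^2-1)*a' + (m+2)*x*a" using assms(2) by (simp add: algebra_simps power2_eq_square)
  also have "\<dots> = (m+2)*c" using assms(1,3) by (simp add: algebra_simps)
  finally show ?thesis by simp
qed

lemma leg_BC: "pderiv (LL (Suc n)) = [:0,1:] * pderiv (LL n) + smult (real n + 1) (LL n) \<and>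
   [:0,1:] * pderiv (LL (Suc n)) - pderiv (LL n) = smult (real n + 1) (LL (Suc n))"
proof (induction n)
  case 0
  show ?case by (simp add: pderiv_X)
next
  case (Suc n)
  have B: "poly (pderiv (LL (Suc n))) x = x * poly (pderiv (LL n)) x + (real n + 1) * poly (LL n) x" for x
    using arg_cong[OF conjunct1[OF Suc.IH], of "\<lambda>p. poly p x"] by simp
  have C: "x * poly (pderiv (LL (Suc n))) x - poly (pderiv (LL n)) x = (real n + 1) * poly (LL (Suc n)) x" for x
    using arg_cong[OF conjunct2[OF Suc.IH], of "\<lambda>p. poly p x"] by simp
  have B1: "poly (pderiv (LL (Suc (Suc n)))) x = x * poly (pderiv (LL (Suc n))) x + (real (Suc n) + 1) * poly (LL (Suc n)) x" for x
  proof -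
    have "poly (pderiv (LL (Suc (Suc n)))) x = (1 / (real n + 2)) * ((2 * real n + 3) * (poly (LL (Suc n)) x + x * poly (pderiv (LL (Suc n))) x) - (real n + 1) * poly (pderiv (LL n)) x)"
      by (simp only: leg_rec pderiv_smult pderiv_diff pderiv_mult pderiv_X) (simp add: algebra_simps)
    also have "\<dots> = x * poly (pderiv (LL (Suc n))) x + (real (Suc n) + 1) * poly (LL (Suc n)) x"
      using C[of x] by (simp add: field_simps)
    finally show ?thesis .
  qed
  have A1: "(x^2 - 1) * poly (pderiv (LL (Suc n))) x = (real n + 1) * (x * poly (LL (Suc n)) x - poly (LL n) x)" for x
  proof -
    have "(x^2 - 1) * poly (pderiv (LL (Suc n))) x = x * (x * poly (pderiv (LL (Suc n))) x - poly (pderiv (LL n)) x) - (poly (pderiv (LL (Suc n))) x - x * poly (pderiv (LL n)) x)"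
      by (simp add: power2_eq_square algebra_simps)
    also have "\<dots> = (real n + 1) * (x * poly (LL (Suc n)) x - poly (LL n) x)"
      using B[of x] C[of x] by (simp add: algebra_simps)
    finally show ?thesis .
  qed
  have C1: "x * poly (pderiv (LL (Suc (Suc n)))) x - poly (pderiv (LL (Suc n))) x = (real (Suc n) + 1) * poly (LL (Suc (Suc n))) x" for x
  proof -
    have "(real n + 2) * poly (LL (Suc (Suc n))) x = (2 * real n + 3) * x * poly (LL (Suc n)) x - (real n + 1) * poly (LL n) x"
      by (simp only: leg_rec poly_smult poly_diff poly_mult) (simp add: field_simps)
    moreover have "poly (pderiv (LL (Suc (Suc n)))) x = x * poly (pderiv (LL (Suc n))) x + (real n + 2) * poly (LL (Suc n)) x"
      using B1[of x] by simp
    ultimately show ?thesis using arithC[of "real n", OF _ _ A1[of x]] by simp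
  qed
  show ?case
  proof
    show "pderiv (LL (Suc (Suc n))) = [:0, 1:] * pderiv (LL (Suc n)) + smult (real (Suc n) + 1) (LL (Suc n))"
      by (rule polyeqI) (simp add: B1)
    show "[:0, 1:] * pderiv (LL (Suc (Suc n))) - pderiv (LL (Suc n)) = smult (real (Suc n) + 1) (LL (Suc (Suc n)))"
      by (rule polyeqI) (use C1 in simp)
  qed
qed
lemma leg_A: "[:-1,0,1:] * pderiv (LL (Suc n)) = smult (real n + 1) ([:0,1:] * LL (Suc n) - LL n)"
proof (rule polyeqI)
  fix x :: real
  have B: "poly (pderiv (LL (Suc n))) x = x * poly (pderiv (LL n)) x + (real n + 1) * poly (LL n) x"
    using arg_cong[OF conjunct1[OF leg_BC[of n]], of "\<lambda>p. poly p x"] by simp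
  have C: "x * poly (pderiv (LL (Suc n))) x - poly (pderiv (LL n)) x = (real n + 1) * poly (LL (Suc n)) x"
    using arg_cong[OF conjunct2[OF leg_BC[of n]], of "\<lambda>p. poly p x"] by simp
  have "(x*x - 1) * poly (pderiv (LL (Suc n))) x = x * (x * poly (pderiv (LL (Suc n))) x - poly (pderiv (LL n)) x) - (poly (pderiv (LL (Suc n))) x - x * poly (pderiv (LL n)) x)"
    by (simp add: algebra_simps)
  also have "\<dots> = (real n + 1) * (x * poly (LL (Suc n)) x - poly (LL n) x)"
    using B C by (simp add: algebra_simps)
  finally show "poly ([:-1,0,1:] * pderiv (LL (Suc n))) x = poly (smult (real n + 1) ([:0,1:] * LL (Suc n) - LL n)) x"
    by (simp add: algebra_simps)
qed

lemma leg_ode: "pderiv ([:-1,0,1:] * pderiv (LL n)) = smult (real n * (real n + 1)) (LL n)"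
proof (cases n)
  case 0
  then show ?thesis by simp
next
  case (Suc m)
  have C: "[:0,1:] * pderiv (LL (Suc m)) - pderiv (LL m) = smult (real m + 1) (LL (Suc m))"
    using leg_BC[of m] by blast
  have "pderiv ([:-1,0,1:] * pderiv (LL n)) = smult (real m + 1) (LL (Suc m) + ([:0,1:] * pderiv (LL (Suc m)) - pderiv (LL m)))"
    unfolding Suc leg_A by (simp add: pderiv_mult pderiv_diff pderiv_smult pderiv_X pderiv_pCons algebra_simps)
  also have "\<dots> = smult (real n * (real n + 1)) (LL n)"
    unfolding C Suc by (rule polyeqI) (simp add: algebra_simps)
  finally show ?thesis .
qed

lemma leg_ortho:
  assumes "n \<noteq> m"
  shows "pint (LL n * LL m) = 0"
proof -
  define W :: "real poly" where "W = [:-1,0,1:]"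
  have W1: "poly W 1 = 0" "poly W (-1) = 0" by (simp_all add: W_def)
  have key: "real k * (real k + 1) * pint (LL k * LL j) = - pint (W * pderiv (LL k) * pderiv (LL j))" for k j
  proof -
    have "pint (pderiv (W * pderiv (LL k) * LL j)) = 0"
      unfolding pint_pderiv by (simp add: W1)
    moreover have "pderiv (W * pderiv (LL k) * LL j) = pderiv (W * pderiv (LL k)) * LL j + W * pderiv (LL k) * pderiv (LL j)"
      by (simp add: pderiv_mult algebra_simps)
    ultimately have "pint (pderiv (W * pderiv (LL k)) * LL j) = - pint (W * pderiv (LL k) * pderiv (LL j))"
      by (simp add: pint_add)
    moreover have "pderiv (W * pderiv (LL k)) * LL j = smult (real k * (real k + 1)) (LL k * LL j)"
      unfolding W_def leg_ode by simp
    ultimately show ?thesis by (simp add: pint_smult)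
  qed
  have "real n * (real n + 1) * pint (LL n * LL m) = real m * (real m + 1) * pint (LL n * LL m)"
    using key[of n m] key[of m n] by (simp add: mult.commute mult.left_commute)
  moreover have "real n * (real n + 1) \<noteq> real m * (real m + 1)"
  proof
    assume h: "real n * (real n + 1) = real m * (real m + 1)"
    show False
    proof (cases "n < m")
      case True
      then have "real n * (real n + 1) < real m * (real m + 1)"
        by (intro mult_strict_mono) auto
      then show False using h by simp
    next
      case False
      then have "m < n" using assms by simp
      then have "real m * (real m + 1) < real n * (real n + 1)"
        by (intro mult_strict_mono) auto
      then show False using h by simp
    qed
  qed
  ultimately show ?thesis by simp
qed

lemma leg_deg: "degree (LL n) = n \<and> coeff (LL n) n \<noteq> 0"
proof (induction n rule: legendre.induct)
  case 1
  then show ?case by simp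
next
  case 2
  then show ?case by simp
next
  case (3 n)
  have c: "coeff (LL (Suc (Suc n))) (Suc (Suc n)) = (2 * real n + 3) / (real n + 2) * coeff (LL (Suc n)) (Suc n)"
    using 3 by (simp add: leg_rec coeff_eq_0)
  have "(2 * real n + 3) / (real n + 2) > 0" by (intro divide_pos_pos) auto
  then have cn: "coeff (LL (Suc (Suc n))) (Suc (Suc n)) \<noteq> 0"
    using 3 c by simp
  have "degree (LL (Suc (Suc n))) \<le> Suc (Suc n)"
    unfolding leg_rec using 3
    by (intro order.trans[OF degree_smult_le] order.trans[OF degree_diff_le] max.boundedI
        order.trans[OF degree_mult_le]) auto
  moreover have "Suc (Suc n) \<le> degree (LL (Suc (Suc n)))"
    using cn by (rule le_degree)
  ultimately show ?case using cn by simp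
qed

lemma deg_le_drop:
  assumes "degree (Q::real poly) \<le> Suc d" "coeff Q (Suc d) = 0"
  shows "degree Q \<le> d"
proof (rule ccontr)
  assume "\<not> degree Q \<le> d"
  then have "degree Q = Suc d" using assms by simp
  then have "Q \<noteq> 0" by auto
  then have "coeff Q (degree Q) \<noteq> 0" by simp
  then show False using assms \<open>degree Q = Suc d\<close> by simp
qed

lemma leg_span: "degree (Q::real poly) \<le> d \<Longrightarrow> \<exists>c. Q = (\<Sum>j\<le>d. smult (c j) (LL j))"
proof (induction d arbitrary: Q)
  case 0
  then have "Q = [:coeff Q 0:]" by (metis degree_0_id le_zero_eq)
  then show ?case by (intro exI[of _ "\<lambda>_. coeff Q 0"]) (simp add: smult_one)
next
  case (Suc d)
  define a where "a = coeff Q (Suc d) / coeff (LL (Suc d)) (Suc d)"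
  define Q' where "Q' = Q - smult a (LL (Suc d))"
  have nz: "coeff (LL (Suc d)) (Suc d) \<noteq> 0" using leg_deg by blast
  have "degree (smult a (LL (Suc d))) \<le> Suc d"
    using leg_deg[of "Suc d"] degree_smult_le[of a "LL (Suc d)"] by simp
  then have "degree Q' \<le> Suc d"
    unfolding Q'_def using Suc.prems by (intro degree_diff_le)
  moreover have "coeff Q' (Suc d) = 0" unfolding Q'_def a_def using nz by simp
  ultimately have "degree Q' \<le> d" by (rule deg_le_drop)
  then obtain c where c: "Q' = (\<Sum>j\<le>d. smult (c j) (LL j))" using Suc.IH by blast
  have "Q = (\<Sum>j\<le>Suc d. smult ((c(Suc d := a)) j) (LL j))"
  proof -
    have "(\<Sum>j\<le>d. smult ((c(Suc d := a)) j) (LL j)) = (\<Sum>j\<le>d. smult (c j) (LL j))"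
      by (intro sum.cong) auto
    then show ?thesis using c unfolding Q'_def by (simp add: algebra_simps)
  qed
  then show ?case by blast
qed

lemma leg_ortho_low:
  assumes "degree (Q::real poly) < k"
  shows "pint (LL k * Q) = 0"
proof -
  have "degree Q \<le> k - 1" using assms by linarith
  then obtain c where c: "Q = (\<Sum>j\<le>k - 1. smult (c j) (LL j))"
    using leg_span by blast
  have "pint (LL k * Q) = (\<Sum>j\<le>k - 1. c j * pint (LL k * LL j))"
    unfolding c by (simp add: sum_distrib_left pint_sum pint_smult)
  also have "\<dots> = 0"
    using assms by (intro sum.neutral) (auto intro!: leg_ortho)
  finally show ?thesis .
qed

lemma pint_sq_zero:
  assumes "pint (R * R) = 0"
  shows "R = 0"
proof (rule ccontr)
  assume R: "R \<noteq> 0"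
  have "integral {-1..1} (\<lambda>x. poly R x * poly R x) = 0"
    using assms by (simp add: pint_def)
  then have "\<forall>x\<in>{-1..1}. poly R x * poly R x = 0"
    by (subst integral_eq_0_iff[symmetric]) (auto intro!: continuous_intros)
  then have "{-1..1::real} \<subseteq> {x. poly R x = 0}" by auto
  moreover have "finite {x. poly R x = 0}" using poly_roots_finite[OF R] .
  ultimately have "finite {-1..1::real}" by (rule finite_subset)
  then show False using infinite_Icc[of "-1" "1::real"] by simp
qed

lemma lambda_props:
  assumes "q \<in> Lambda i j"
  shows "degree q \<le> j" "\<And>Q. degree Q < i \<Longrightarrow> pint (q * Q) = 0"
proof -
  obtain c where c: "q = (\<Sum>k = i..j. smult (c k) (LL k))"
    using assms unfolding Lambda_def by blast
  show "degree q \<le> j"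
    unfolding c by (intro degree_sum_le) (auto intro: order.trans[OF degree_smult_le] simp: leg_deg)
  fix Q :: "real poly" assume Q: "degree Q < i"
  have "pint (q * Q) = (\<Sum>k = i..j. c k * pint (LL k * Q))"
    unfolding c by (simp add: sum_distrib_right pint_sum pint_smult)
  also have "\<dots> = 0"
    using Q by (intro sum.neutral) (auto intro!: leg_ortho_low)
  finally show "pint (q * Q) = 0" .
qed

lemma leg_nz: "pint (LL k * LL k) \<noteq> 0"
proof
  assume "pint (LL k * LL k) = 0"
  then have "LL k = 0" by (rule pint_sq_zero)
  then show False using leg_deg[of k] by simp
qed

lemma proj_exists:
  assumes ui: "\<And>Q. (\<lambda>x. u x * poly Q x) integrable_on {-1..1}"
  shows "is_L2_proj p u (proj_L2 p u)"
proof -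
  define al where "al k = integral {-1..1} (\<lambda>x. u x * poly (LL k) x) / pint (LL k * LL k)" for k
  define P where "P = (\<Sum>k\<le>p. smult (al k) (LL k))"
  have Pint: "(\<lambda>x. (u x - poly R x) * poly Q x) integrable_on {-1..1}" for R Q
  proof -
    have "(\<lambda>x. u x * poly Q x - poly (R * Q) x) integrable_on {-1..1}"
      by (intro integrable_diff ui poly_integrable)
    then show ?thesis by (simp add: algebra_simps)
  qed
  have Phi_sum: "integral {-1..1} (\<lambda>x. (u x - poly R x) * poly (\<Sum>j\<le>p. smult (c j) (LL j)) x)
      = (\<Sum>j\<le>p. c j * integral {-1..1} (\<lambda>x. (u x - poly R x) * poly (LL j) x))" for R c
  proof -
    have "(\<lambda>x. (u x - poly R x) * poly (\<Sum>j\<le>p. smult (c j) (LL j)) x)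
        = (\<lambda>x. \<Sum>j\<le>p. c j * ((u x - poly R x) * poly (LL j) x))"
      by (simp add: poly_sum sum_distrib_left algebra_simps)
    moreover have "integral {-1..1} (\<lambda>x. \<Sum>j\<le>p. c j * ((u x - poly R x) * poly (LL j) x))
       = (\<Sum>j\<le>p. integral {-1..1} (\<lambda>x. c j * ((u x - poly R x) * poly (LL j) x)))"
    proof (rule integral_sum)
      fix j
      show "(\<lambda>x. c j * ((u x - poly R x) * poly (LL j) x)) integrable_on {-1..1}"
        using integrable_on_cmult_left[OF Pint[of R "LL j"], of "c j"] by simp
    qed simp
    ultimately show ?thesis by simp
  qed
  have Pj: "integral {-1..1} (\<lambda>x. (u x - poly P x) * poly (LL j) x) = 0" if "j \<le> p" for j
  proof -
    have "integral {-1..1} (\<lambda>x. (u x - poly P x) * poly (LL j) x)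
        = integral {-1..1} (\<lambda>x. u x * poly (LL j) x) - pint (P * LL j)"
    proof -
      have "(\<lambda>x. poly (P * LL j) x) = (\<lambda>x. poly P x * poly (LL j) x)" by simp
      moreover have "(\<lambda>x. poly P x * poly (LL j) x) integrable_on {-1..1}"
        using poly_integrable[of "P * LL j"] by simp
      ultimately show ?thesis
        unfolding pint_mult by (simp add: left_diff_distrib integral_diff ui)
    qed
    also have "pint (P * LL j) = (\<Sum>k\<le>p. al k * pint (LL k * LL j))"
      unfolding P_def by (simp add: sum_distrib_right pint_sum pint_smult)
    also have "\<dots> = al j * pint (LL j * LL j)"
      using that by (subst sum.remove[of _ j]) (auto intro!: sum.neutral leg_ortho)
    also have "\<dots> = integral {-1..1} (\<lambda>x. u x * poly (LL j) x)"
      unfolding al_def using leg_nz[of j] by simp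
    finally show ?thesis by simp
  qed
  have isP: "is_L2_proj p u P"
    unfolding is_L2_proj_def
  proof safe
    show "degree P \<le> p"
      unfolding P_def by (intro degree_sum_le) (auto intro: order.trans[OF degree_smult_le] simp: leg_deg)
    fix Q :: "real poly" assume "degree Q \<le> p"
    then obtain c where c: "Q = (\<Sum>j\<le>p. smult (c j) (LL j))" using leg_span by blast
    show "integral {-1..1} (\<lambda>x. (u x - poly P x) * poly Q x) = 0"
      unfolding c Phi_sum using Pj by simp
  qed
  have uniq: "P' = P" if "is_L2_proj p u P'" for P'
  proof -
    have d: "degree P' \<le> p" and o: "\<And>Q. degree Q \<le> p \<Longrightarrow> integral {-1..1} (\<lambda>x. (u x - poly P' x) * poly Q x) = 0"
      using that unfolding is_L2_proj_def by auto
    have o2: "\<And>Q. degree Q \<le> p \<Longrightarrow> integral {-1..1} (\<lambda>x. (u x - poly P x) * poly Q x) = 0"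
      using isP unfolding is_L2_proj_def by auto
    have dQ: "degree (P' - P) \<le> p"
      using d isP unfolding is_L2_proj_def by (intro degree_diff_le) auto
    have "pint ((P' - P) * (P' - P)) = integral {-1..1} (\<lambda>x. (u x - poly P x) * poly (P' - P) x) - integral {-1..1} (\<lambda>x. (u x - poly P' x) * poly (P' - P) x)"
    proof -
      have "(\<lambda>x. poly (P' - P) x * poly (P' - P) x) = (\<lambda>x. (u x - poly P x) * poly (P' - P) x - (u x - poly P' x) * poly (P' - P) x)"
        by (auto simp: algebra_simps)
      then show ?thesis unfolding pint_mult by (simp only: integral_diff[OF Pint Pint])
    qed
    also have "\<dots> = 0" using o[OF dQ] o2[OF dQ] by simp
    finally have "P' - P = 0" by (rule pint_sq_zero)
    then show ?thesis by simp
  qed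
  have "\<exists>!P. is_L2_proj p u P" using isP uniq by blast
  then show ?thesis unfolding proj_L2_def by (rule theI')
qed





lemma ibp_G:
  fixes g G :: "real \<Rightarrow> real" and r :: "real poly"
  assumes g: "g absolutely_integrable_on {a..b}" and ab: "a \<le> b"
    and G: "\<And>x. x \<in> {a..b} \<Longrightarrow> G x = G a + integral {a..x} g"
  shows "integral {a..b} (\<lambda>x. poly r x * g x)
       = poly r b * G b - poly r a * G a - integral {a..b} (\<lambda>x. poly (pderiv r) x * G x)"
proof -
  have gi: "g integrable_on {a..b}" using g set_lebesgue_integral_eq_integral(1) by blast
  have rg: "(\<lambda>x. poly r x * g x) integrable_on {a..b}"
  proof -
    have "(\<lambda>x. poly r x * g x) absolutely_integrable_on {a..b}"
      by (rule absolutely_integrable_bounded_measurable_product_real[OF _ _ _ g])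
         (auto intro!: continuous_imp_measurable_on_sets_lebesgue continuous_intros
               compact_imp_bounded compact_continuous_image)
    then show ?thesis using set_lebesgue_integral_eq_integral(1) by blast
  qed
  have F0c: "continuous_on {a..b} (\<lambda>x. integral {a..x} g)"
    by (rule indefinite_integral_continuous_1[OF gi])
  have "integral {a..b} (\<lambda>x. poly (pderiv r) x * G x)
      = integral {a..b} (\<lambda>x. G a * poly (pderiv r) x + poly (pderiv r) x * integral {a..x} g)"
  proof (rule integral_cong)
    fix x assume "x \<in> {a..b}"
    from G[OF this] show "poly (pderiv r) x * G x = G a * poly (pderiv r) x + poly (pderiv r) x * integral {a..x} g"
      by (simp add: algebra_simps)
  qed
  also have "\<dots> = G a * integral {a..b} (\<lambda>x. poly (pderiv r) x) + integral {a..b} (\<lambda>x. poly (pderiv r) x * integral {a..x} g)"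
  proof -
    have i1: "(\<lambda>x. G a * poly (pderiv r) x) integrable_on {a..b}"
      by (intro integrable_continuous_real continuous_intros)
    have i2: "(\<lambda>x. poly (pderiv r) x * integral {a..x} g) integrable_on {a..b}"
      by (intro integrable_continuous_real continuous_on_mult continuous_on_poly F0c continuous_on_id)
    show ?thesis using integral_add[OF i1 i2] by simp
  qed
  also have "integral {a..b} (\<lambda>x. poly (pderiv r) x) = poly r b - poly r a"
  proof -
    have "((\<lambda>x. poly (pderiv r) x) has_integral (poly r b - poly r a)) {a..b}"
      by (rule fundamental_theorem_of_calculus)
         (use ab in \<open>auto intro!: DERIV_subset[OF poly_DERIV] simp: has_real_derivative_iff_has_vector_derivative[symmetric]\<close>)
    then show ?thesis by (rule integral_unique)
  qed
  also have "integral {a..b} (\<lambda>x. poly (pderiv r) x * integral {a..x} g) = integral {a..b} (\<lambda>t. g t * (poly r b - poly r t))"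
    by (rule fub_tri[OF g ab])
  also have "\<dots> = poly r b * integral {a..b} g - integral {a..b} (\<lambda>x. poly r x * g x)"
  proof -
    have "(\<lambda>t. g t * (poly r b - poly r t)) = (\<lambda>t. poly r b * g t - poly r t * g t)"
      by (auto simp: algebra_simps)
    moreover have "(\<lambda>t. poly r b * g t) integrable_on {a..b}"
      using integrable_on_cmult_left[OF gi, of "poly r b"] by simp
    ultimately show ?thesis using integral_diff[OF _ rg, of "\<lambda>t. poly r b * g t"] by simp
  qed
  finally have "integral {a..b} (\<lambda>x. poly (pderiv r) x * G x) = G a * (poly r b - poly r a) + (poly r b * integral {a..b} g - integral {a..b} (\<lambda>x. poly r x * g x))" .
  moreover have "G b = G a + integral {a..b} g" using G[of b] ab by simp
  ultimately show ?thesis by (simp add: algebra_simps)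
qed





lemma sq_abs:
  fixes g :: "real \<Rightarrow> real"
  assumes "g integrable_on {a..b}" "(\<lambda>x. (g x)^2) integrable_on {a..b}"
  shows "g absolutely_integrable_on {a..b}"
proof (rule measurable_bounded_by_integrable_imp_absolutely_integrable)
  show "g \<in> borel_measurable (lebesgue_on {a..b})" using assms(1) by (rule integrable_imp_measurable)
  show "{a..b} \<in> sets lebesgue" by simp
  show "(\<lambda>x. 1 + (g x)^2) integrable_on {a..b}"
    by (rule integrable_add[OF integrable_const_ivl assms(2)])
  show "norm (g x) \<le> 1 + (g x)^2" for x
  proof -
    have "0 \<le> (\<bar>g x\<bar> - 1)^2" by simp
    moreover have "(\<bar>g x\<bar> - 1)^2 = (g x)^2 - 2 * \<bar>g x\<bar> + 1"
      by (simp add: power2_diff)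
    moreover have "0 \<le> (g x)^2" by simp
    ultimately show ?thesis by simp
  qed
qed

lemma quad_nonneg_imp:
  fixes A B C :: real
  assumes "\<And>t. 0 \<le> t^2 * A - 2 * t * B + C" "0 \<le> A" "0 \<le> C"
  shows "\<bar>B\<bar> \<le> sqrt A * sqrt C"
proof -
  have "B^2 \<le> A * C"
  proof (cases "A = 0")
    case True
    have "B = 0"
    proof (rule ccontr)
      assume B: "B \<noteq> 0"
      have "0 \<le> ((C + 1) / (2 * B))^2 * A - 2 * ((C + 1) / (2 * B)) * B + C" by (rule assms(1))
      moreover have "2 * ((C + 1) / (2 * B)) * B = C + 1" using B by simp
      ultimately show False using True by simp
    qed
    then show ?thesis using True by simp
  next
    case False
    then have A: "A > 0" using assms(2) by simp
    have "0 \<le> (B / A)^2 * A - 2 * (B / A) * B + C" by (rule assms(1))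
    moreover have "(B / A)^2 * A = B^2 / A" using A by (simp add: power2_eq_square)
    moreover have "2 * (B / A) * B = 2 * (B^2 / A)" by (simp add: power2_eq_square)
    ultimately have "B^2 / A \<le> C" by linarith
    then show ?thesis using A by (simp add: divide_le_eq mult.commute)
  qed
  then have "sqrt (B^2) \<le> sqrt (A * C)" by (rule real_sqrt_le_mono)
  then show ?thesis by (simp add: real_sqrt_mult)
qed

lemma CS:
  fixes g :: "real \<Rightarrow> real" and q :: "real poly"
  assumes gi: "g integrable_on {a..b}" and g2: "(\<lambda>x. (g x)^2) integrable_on {a..b}"
  shows "\<bar>integral {a..b} (\<lambda>x. poly q x * g x)\<bar>
     \<le> sqrt (integral {a..b} (\<lambda>x. (poly q x)^2)) * sqrt (integral {a..b} (\<lambda>x. (g x)^2))"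
proof (rule quad_nonneg_imp)
  have ga: "g absolutely_integrable_on {a..b}" using sq_abs[OF gi g2] .
  have qg: "(\<lambda>x. poly q x * g x) integrable_on {a..b}"
  proof -
    have "(\<lambda>x. poly q x * g x) absolutely_integrable_on {a..b}"
      by (rule absolutely_integrable_bounded_measurable_product_real[OF _ _ _ ga])
         (auto intro!: continuous_imp_measurable_on_sets_lebesgue continuous_intros
               compact_imp_bounded compact_continuous_image)
    then show ?thesis using set_lebesgue_integral_eq_integral(1) by blast
  qed
  have q2: "(\<lambda>x. (poly q x)^2) integrable_on {a..b}"
    by (intro integrable_continuous_real continuous_intros)
  fix t :: real
  have i1: "(\<lambda>x. t^2 * (poly q x)^2) integrable_on {a..b}"
    using integrable_on_cmult_left[OF q2, of "t^2"] by simp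
  have i2: "(\<lambda>x. 2 * t * (poly q x * g x)) integrable_on {a..b}"
    using integrable_on_cmult_left[OF qg, of "2 * t"] by simp
  have i3: "(\<lambda>x. t^2 * (poly q x)^2 - 2 * t * (poly q x * g x)) integrable_on {a..b}"
    by (rule integrable_diff[OF i1 i2])
  have i4: "(\<lambda>x. t^2 * (poly q x)^2 - 2 * t * (poly q x * g x) + (g x)^2) integrable_on {a..b}"
    by (rule integrable_add[OF i3 g2])
  have eq: "(\<lambda>x. (t * poly q x - g x)^2) = (\<lambda>x. t^2 * (poly q x)^2 - 2 * t * (poly q x * g x) + (g x)^2)"
    by (rule ext) (simp add: power2_eq_square algebra_simps)
  have "0 \<le> integral {a..b} (\<lambda>x. (t * poly q x - g x)^2)"
    by (rule integral_nonneg) (use i4 eq in auto)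
  also have "integral {a..b} (\<lambda>x. (t * poly q x - g x)^2)
     = integral {a..b} (\<lambda>x. t^2 * (poly q x)^2 - 2 * t * (poly q x * g x)) + integral {a..b} (\<lambda>x. (g x)^2)"
    unfolding eq by (rule integral_add[OF i3 g2])
  also have "integral {a..b} (\<lambda>x. t^2 * (poly q x)^2 - 2 * t * (poly q x * g x))
     = integral {a..b} (\<lambda>x. t^2 * (poly q x)^2) - integral {a..b} (\<lambda>x. 2 * t * (poly q x * g x))"
    by (rule integral_diff[OF i1 i2])
  also have "integral {a..b} (\<lambda>x. t^2 * (poly q x)^2) = t^2 * integral {a..b} (\<lambda>x. (poly q x)^2)"
    by (rule integral_mult_right)
  also have "integral {a..b} (\<lambda>x. 2 * t * (poly q x * g x)) = 2 * t * integral {a..b} (\<lambda>x. poly q x * g x)"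
    by (rule integral_mult_right)
  finally show "0 \<le> t^2 * integral {a..b} (\<lambda>x. (poly q x)^2) - 2 * t * integral {a..b} (\<lambda>x. poly q x * g x) + integral {a..b} (\<lambda>x. (g x)^2)" .
  show "0 \<le> integral {a..b} (\<lambda>x. (poly q x)^2)" by (rule integral_nonneg[OF q2]) auto
  show "0 \<le> integral {a..b} (\<lambda>x. (g x)^2)" by (rule integral_nonneg[OF g2]) auto
qed



lemma key:
  fixes E :: "nat \<Rightarrow> real \<Rightarrow> real" and r :: "real poly" and n :: nat
  assumes absint: "\<And>j. j \<le> Suc n \<Longrightarrow> E j absolutely_integrable_on {-1..1}"
    and chain: "\<And>j x. j \<le> n \<Longrightarrow> x \<in> {-1..1} \<Longrightarrow> E j x = E j (-1) + integral {-1..x} (E (Suc j))"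
    and bc: "\<And>i. i \<in> {1..n} \<Longrightarrow> poly ((pderiv^^i) r) 1 = 0 \<and> poly ((pderiv^^i) r) (-1) = 0"
    and last: "integral {-1..1} (\<lambda>x. poly ((pderiv^^(Suc n)) r) x * E 0 x) = 0"
  shows "integral {-1..1} (\<lambda>x. poly r x * E (Suc n) x) = poly r 1 * E n 1 - poly r (-1) * E n (-1)"
proof -
  define S where "S k = integral {-1..1} (\<lambda>x. poly ((pderiv^^k) r) x * E (Suc n - k) x)" for k
  have step: "S k = poly ((pderiv^^k) r) 1 * E (n - k) 1 - poly ((pderiv^^k) r) (-1) * E (n - k) (-1) - S (Suc k)"
    if "k \<le> n" for k
  proof -
    have e: "Suc n - k = Suc (n - k)" using that by simp
    have "S k = integral {-1..1} (\<lambda>x. poly ((pderiv^^k) r) x * E (Suc (n - k)) x)"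
      unfolding S_def e ..
    also have "\<dots> = poly ((pderiv^^k) r) 1 * E (n - k) 1 - poly ((pderiv^^k) r) (-1) * E (n - k) (-1)
        - integral {-1..1} (\<lambda>x. poly (pderiv ((pderiv^^k) r)) x * E (n - k) x)"
      by (rule ibp_G[OF absint _ chain]) (use that in auto)
    also have "integral {-1..1} (\<lambda>x. poly (pderiv ((pderiv^^k) r)) x * E (n - k) x) = S (Suc k)"
      unfolding S_def by simp
    finally show ?thesis .
  qed
  have zero: "m \<le> n \<Longrightarrow> S (Suc n - m) = 0" for m
  proof (induction m)
    case 0
    then show ?case using last unfolding S_def by simp
  next
    case (Suc m)
    define k where "k = n - m"
    have k: "1 \<le> k" "k \<le> n" "Suc n - Suc m = k" "Suc k = Suc n - m" using Suc.prems by (auto simp: k_def)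
    have "S k = - S (Suc k)"
      using step[OF k(2)] bc[of k] k(1,2) by simp
    then show ?case using Suc k by simp
  qed
  have "S 0 = poly r 1 * E n 1 - poly r (-1) * E n (-1) - S 1"
    using step[of 0] by simp
  moreover have "S 1 = 0" using zero[of n] by simp
  ultimately show ?thesis unfolding S_def by simp
qed

lemma degree_pderiv_iter: "degree ((pderiv^^k) (R::real poly)) = degree R - k"
  by (induction k) (auto simp: degree_pderiv)

lemma pderiv_iter_zero: "degree (R::real poly) < k \<Longrightarrow> (pderiv^^k) R = 0"
proof (induction k)
  case 0
  then show ?case by simp
next
  case (Suc k)
  show ?case
  proof (cases "degree R < k")
    case True
    then show ?thesis using Suc.IH by simp
  next
    case False
    then have "degree ((pderiv^^k) R) = 0" using Suc.prems by (simp add: degree_pderiv_iter)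
    then show ?thesis by (simp add: pderiv_eq_0_iff)
  qed
qed

lemma reflect11: "integral {-1..1} (\<lambda>x. h (- x)) = integral {-1..1::real} (h :: real \<Rightarrow> real)"
  using Henstock_Kurzweil_Integration.integral_reflect_real[of 1 "-1" h] by simp

lemma pderiv_iter_reflect:
  "(pderiv^^i) (pcompose q [:0,-1:]) = smult ((-1)^i) (pcompose ((pderiv^^i) (q::real poly)) [:0,-1:])"
proof (induction i)
  case 0
  then show ?case by simp
next
  case (Suc i)
  show ?case
    by (simp add: Suc pderiv_smult pderiv_pcompose pderiv_pCons)
qed

lemma poly_ftc:
  fixes R :: "real poly"
  assumes "a \<le> x"
  shows "integral {a..x} (\<lambda>y. poly (pderiv R) y) = poly R x - poly R a"
proof -
  have "((\<lambda>y. poly (pderiv R) y) has_integral (poly R x - poly R a)) {a..x}"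
    by (rule fundamental_theorem_of_calculus)
       (use assms in \<open>auto intro!: DERIV_subset[OF poly_DERIV] simp: has_real_derivative_iff_has_vector_derivative[symmetric]\<close>)
  then show ?thesis by (rule integral_unique)
qed

theorem lemma5:
  fixes p \<nu> :: nat and u :: "real \<Rightarrow> real" and D :: "nat \<Rightarrow> real \<Rightarrow> real"
    and q :: "real poly"
  assumes "\<nu> \<le> p"
    and "sobolev_chain (\<nu> + 1) u D"
    and "q \<in> Lambda (p - \<nu>) (p + \<nu> + 1)"
    and "poly q 1 = 1" and "poly q (-1) = 0"
    and "\<forall>i\<in>{1..\<nu>}. poly ((pderiv ^^ i) q) 1 = 0 \<and> poly ((pderiv ^^ i) q) (-1) = 0"
  shows "\<forall>s\<in>{-1, 1::real}.
           \<bar>D \<nu> s - poly ((pderiv ^^ \<nu>) (proj_L2 p u)) s\<bar> \<le> l2norm (poly q) * l2norm (D (\<nu> + 1))"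
proof -
  have sc1: "\<forall>x\<in>{-1..1}. D 0 x = u x"
    and sc2: "\<forall>j<\<nu> + 1. D (Suc j) integrable_on {-1..1} \<and> (\<forall>x\<in>{-1..1}. D j x = D j (-1) + integral {-1..x} (D (Suc j)))"
    and sc4: "(\<lambda>x. (D (\<nu> + 1) x)^2) integrable_on {-1..1}"
    using assms(2) unfolding sobolev_chain_def by blast+
  have Du: "\<And>x. x \<in> {-1..1} \<Longrightarrow> D 0 x = u x" using sc1 by blast
  have Dint: "\<And>j. j \<le> \<nu> \<Longrightarrow> D (Suc j) integrable_on {-1..1}"
  proof -
    fix j assume "j \<le> \<nu>" then have "j < \<nu> + 1" by simp
    then show "D (Suc j) integrable_on {-1..1}" using sc2 by blast
  qed
  have Dch: "\<And>j x. j \<le> \<nu> \<Longrightarrow> x \<in> {-1..1} \<Longrightarrow> D j x = D j (-1) + integral {-1..x} (D (Suc j))"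
  proof -
    fix j :: nat and x :: real assume "j \<le> \<nu>" "x \<in> {-1..1}"
    moreover from this(1) have "j < \<nu> + 1" by simp
    ultimately show "D j x = D j (-1) + integral {-1..x} (D (Suc j))" using sc2 by blast
  qed
  have f2: "(\<lambda>x. (D (Suc \<nu>) x)^2) integrable_on {-1..1}" using sc4 by simp
  have fi: "D (Suc \<nu>) integrable_on {-1..1}" using Dint[of \<nu>] by simp
  have fa: "D (Suc \<nu>) absolutely_integrable_on {-1..1}" by (rule sq_abs[OF fi f2])
  have Dc: "continuous_on {-1..1} (D j)" if "j \<le> \<nu>" for j
  proof -
    have "continuous_on {-1..1} (\<lambda>x. D j (-1) + integral {-1..x} (D (Suc j)))"
      by (intro continuous_intros indefinite_integral_continuous_1 Dint that)
    then show ?thesis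
    proof (rule continuous_on_eq)
      fix x :: real assume "x \<in> {-1..1}"
      from Dch[OF that this] show "D j (-1) + integral {-1..x} (D (Suc j)) = D j x" by simp
    qed
  qed
  define P where "P = proj_L2 p u"
  have isP: "is_L2_proj p u P"
    unfolding P_def
  proof (rule proj_exists)
    fix Q
    have "(\<lambda>x. D 0 x * poly Q x) integrable_on {-1..1}"
      by (intro integrable_continuous_real continuous_intros Dc) simp
    then show "(\<lambda>x. u x * poly Q x) integrable_on {-1..1}"
      by (rule integrable_eq) (simp add: Du)
  qed
  have degP: "degree P \<le> p" using isP unfolding is_L2_proj_def by auto
  have orthP: "\<And>Q. degree Q \<le> p \<Longrightarrow> integral {-1..1} (\<lambda>x. (u x - poly P x) * poly Q x) = 0"
    using isP unfolding is_L2_proj_def by auto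
  define E where "E j x = D j x - poly ((pderiv^^j) P) x" for j x
  have absint: "E j absolutely_integrable_on {-1..1}" if "j \<le> Suc \<nu>" for j
  proof (cases "j \<le> \<nu>")
    case True
    have "continuous_on {-1..1} (E j)"
      unfolding E_def[abs_def] by (intro continuous_intros Dc True)
    then show ?thesis by (rule absolutely_integrable_continuous_real)
  next
    case False
    then have j: "j = Suc \<nu>" using that by simp
    have "(\<lambda>x. poly ((pderiv^^j) P) x) absolutely_integrable_on {-1..1}"
      by (intro absolutely_integrable_continuous_real continuous_intros)
    then show ?thesis
      unfolding E_def[abs_def] j using fa by (intro set_integral_diff(1))
  qed
  have chain: "E j x = E j (-1) + integral {-1..x} (E (Suc j))" if j: "j \<le> \<nu>" and x: "x \<in> {-1..1}" for j x
  proof -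
    have x1: "-1 \<le> x" "x \<le> 1" using x by auto
    have i1: "D (Suc j) integrable_on {-1..x}"
      by (rule integrable_subinterval_real[OF Dint[OF j]]) (use x1 in auto)
    have i2: "(\<lambda>y. poly ((pderiv^^Suc j) P) y) integrable_on {-1..x}" by (rule poly_integrable)
    have "integral {-1..x} (E (Suc j)) = integral {-1..x} (D (Suc j)) - integral {-1..x} (\<lambda>y. poly ((pderiv^^Suc j) P) y)"
      unfolding E_def[abs_def] by (rule integral_diff[OF i1 i2])
    also have "integral {-1..x} (\<lambda>y. poly ((pderiv^^Suc j) P) y) = poly ((pderiv^^j) P) x - poly ((pderiv^^j) P) (-1)"
      using poly_ftc[OF x1(1), of "(pderiv^^j) P"] by simp
    finally show ?thesis using Dch[OF j x] unfolding E_def by simp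
  qed
  have main_r: "integral {-1..1} (\<lambda>x. poly r x * D (Suc \<nu>) x) = poly r 1 * E \<nu> 1 - poly r (-1) * E \<nu> (-1)"
    if dr: "degree r \<le> p + \<nu> + 1" and orr: "\<And>Q. degree Q < p - \<nu> \<Longrightarrow> pint (r * Q) = 0"
      and bcr: "\<And>i. i \<in> {1..\<nu>} \<Longrightarrow> poly ((pderiv^^i) r) 1 = 0 \<and> poly ((pderiv^^i) r) (-1) = 0"
    for r
  proof -
    have last: "integral {-1..1} (\<lambda>x. poly ((pderiv^^(Suc \<nu>)) r) x * E 0 x) = 0"
    proof -
      have "integral {-1..1} (\<lambda>x. poly ((pderiv^^(Suc \<nu>)) r) x * E 0 x)
          = integral {-1..1} (\<lambda>x. (u x - poly P x) * poly ((pderiv^^(Suc \<nu>)) r) x)"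
        by (rule integral_cong) (simp add: E_def Du)
      also have "\<dots> = 0"
        by (rule orthP) (use dr degree_pderiv_iter[of "Suc \<nu>" r] in arith)
      finally show ?thesis .
    qed
    have k: "integral {-1..1} (\<lambda>x. poly r x * E (Suc \<nu>) x) = poly r 1 * E \<nu> 1 - poly r (-1) * E \<nu> (-1)"
      by (rule key[OF absint chain bcr last]) auto
    have z: "pint (r * (pderiv^^Suc \<nu>) P) = 0"
    proof (cases "degree P < Suc \<nu>")
      case True
      then have "(pderiv^^Suc \<nu>) P = 0" by (rule pderiv_iter_zero)
      then show ?thesis by (simp add: pint_def)
    next
      case False
      then have "degree ((pderiv^^Suc \<nu>) P) < p - \<nu>" using degP degree_pderiv_iter[of "Suc \<nu>" P] by arith
      then show ?thesis by (rule orr)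
    qed
    have rf: "(\<lambda>x. poly r x * D (Suc \<nu>) x) integrable_on {-1..1}"
    proof -
      have "(\<lambda>x. poly r x * D (Suc \<nu>) x) absolutely_integrable_on {-1..1}"
        by (rule absolutely_integrable_bounded_measurable_product_real[OF _ _ _ fa])
           (auto intro!: continuous_imp_measurable_on_sets_lebesgue continuous_intros
                 compact_imp_bounded compact_continuous_image)
      then show ?thesis using set_lebesgue_integral_eq_integral(1) by blast
    qed
    have rp: "(\<lambda>x. poly r x * poly ((pderiv^^Suc \<nu>) P) x) integrable_on {-1..1}"
      using poly_integrable[of "r * (pderiv^^Suc \<nu>) P"] by simp
    have "integral {-1..1} (\<lambda>x. poly r x * E (Suc \<nu>) x)
        = integral {-1..1} (\<lambda>x. poly r x * D (Suc \<nu>) x - poly r x * poly ((pderiv^^Suc \<nu>) P) x)"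
      by (simp add: E_def algebra_simps)
    also have "\<dots> = integral {-1..1} (\<lambda>x. poly r x * D (Suc \<nu>) x) - pint (r * (pderiv^^Suc \<nu>) P)"
      unfolding pint_mult by (rule integral_diff[OF rf rp])
    finally show ?thesis using k z by simp
  qed
  note lp = lambda_props[OF assms(3)]
  have bnd: "\<bar>integral {-1..1} (\<lambda>x. poly r x * D (Suc \<nu>) x)\<bar> \<le> l2norm (poly q) * l2norm (D (\<nu> + 1))"
    if "integral {-1..1} (\<lambda>x. (poly r x)^2) = integral {-1..1} (\<lambda>x. (poly q x)^2)" for r
    using CS[OF fi f2, of r] that unfolding l2norm_def by simp
  show ?thesis
  proof
    fix s :: real assume s: "s \<in> {-1, 1}"
    show "\<bar>D \<nu> s - poly ((pderiv ^^ \<nu>) (proj_L2 p u)) s\<bar> \<le> l2norm (poly q) * l2norm (D (\<nu> + 1))"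
    proof (cases "s = 1")
      case True
      have "integral {-1..1} (\<lambda>x. poly q x * D (Suc \<nu>) x) = E \<nu> 1"
        using main_r[of q] lp assms(4,5,6) by auto
      then show ?thesis using bnd[of q] True unfolding E_def P_def by simp
    next
      case False
      then have s1: "s = -1" using s by simp
      define qt where "qt = pcompose q [:0,-1:]"
      have pqt: "poly qt x = poly q (-x)" for x unfolding qt_def by (simp add: poly_pcompose)
      have dqt: "degree qt = degree q" unfolding qt_def by (simp add: degree_pcompose)
      have oqt: "pint (qt * Q) = 0" if "degree Q < p - \<nu>" for Q
      proof -
        have "pint (qt * Q) = integral {-1..1} (\<lambda>x. poly q (-x) * poly Q x)"
          unfolding pint_mult pqt ..
        also have "\<dots> = integral {-1..1} (\<lambda>x. poly q x * poly Q (-x))"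
          using reflect11[of "\<lambda>x. poly q x * poly Q (-x)"] by simp
        also have "\<dots> = pint (q * pcompose Q [:0,-1:])"
          unfolding pint_mult by (simp add: poly_pcompose)
        also have "\<dots> = 0"
          by (rule lp(2)) (use that in \<open>simp add: degree_pcompose\<close>)
        finally show ?thesis .
      qed
      have bqt: "poly ((pderiv^^i) qt) 1 = 0 \<and> poly ((pderiv^^i) qt) (-1) = 0" if "i \<in> {1..\<nu>}" for i
        using assms(6) that unfolding qt_def pderiv_iter_reflect by (simp add: poly_pcompose)
      have "integral {-1..1} (\<lambda>x. poly qt x * D (Suc \<nu>) x) = - E \<nu> (-1)"
        using main_r[of qt, OF _ oqt bqt] lp(1) dqt assms(4,5) by (simp add: pqt)
      moreover have "integral {-1..1} (\<lambda>x. (poly qt x)^2) = integral {-1..1} (\<lambda>x. (poly q x)^2)"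
        unfolding pqt using reflect11[of "\<lambda>x. (poly q x)^2"] by simp
      ultimately show ?thesis using bnd[of qt] s1 unfolding E_def P_def by simp
    qed
  qed
qed

end
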